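(* Let $P,R\in C^1(\mathbb{R},\mathrm{Sym}(n,\mathbb{R}))$, $Q\in C^1(\mathbb{R},\mathrm{Mat}(n,\mathbb{R}))$ satisfy (F2) with constants $C_1,C_2,C_3$. For $\lambda\in\mathbb{R}$ let $B_\lambda(t)=\begin{bmatrix}P^{-1}&-P^{-1}Q\\-Q^TP^{-1}&Q^TP^{-1}Q-R-\lambda I_n\end{bmatrix}(t)$, let $\gamma_{(\tau,\lambda)}$ be the solution of $\dot\gamma=JB_\lambda(t)\gamma$, $\gamma(\tau)=I_{2n}$, and set $E^s_\lambda(\tau)=\{v\in\mathbb{R}^{2n}:\lim_{t\to+\infty}\gamma_{(\tau,\lambda)}(t)v=0\}$, $E^u_\lambda(\tau)=\{v\in\mathbb{R}^{2n}:\lim_{t\to-\infty}\gamma_{(\tau,\lambda)}(t)v=0\}$. Then $E^u_\lambda(-\tau)\cap E^s_\lambda(\tau)=\{0\}$ for all $\tau\ge0$ and all $\lambda\ge\frac{2C_2^2}{C_1}+C_3$.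
   Context: (F2): the limits of $P,Q,R$ as $t\to\pm\infty$ exist and $\langle P(t)v,v\rangle\ge C_1|v|^2$, $|P(t)v|\ge C_1|v|$, $|Q(t)v|\le C_2|v|$, $|R(t)v|\le C_3|v|$ for all $t,v$. $J=\begin{bmatrix}0&-I_n\\ I_n&0\end{bmatrix}$. *)

theory Defs
  imports "HOL-Analysis.Analysis"
begin

text \<open>Block matrices: a 2n x 2n matrix indexed by the sum type 'n + 'n,
  the first summand giving the first block row/column.\<close>
definition blockmat ::
  "real^'n^'n \<Rightarrow> real^'n^'n \<Rightarrow> real^'n^'n \<Rightarrow> real^'n^'n \<Rightarrow> real^('n::finite + 'n)^('n + 'n)" where
  "blockmat A B C D = (\<chi> i j. case i of
      Inl a \<Rightarrow> (case j of Inl b \<Rightarrow> A $ a $ b | Inr b \<Rightarrow> B $ a $ b)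
    | Inr a \<Rightarrow> (case j of Inl b \<Rightarrow> C $ a $ b | Inr b \<Rightarrow> D $ a $ b))"

definition Jmat :: "real^('n::finite + 'n)^('n + 'n)" where
  "Jmat = blockmat 0 (- mat 1) (mat 1) 0"

definition Bmat ::
  "(real \<Rightarrow> real^'n^'n) \<Rightarrow> (real \<Rightarrow> real^'n^'n) \<Rightarrow> (real \<Rightarrow> real^'n^'n) \<Rightarrow> real \<Rightarrow> real
     \<Rightarrow> real^('n::finite + 'n)^('n + 'n)" where
  "Bmat P Q R lam t =
     blockmat (matrix_inv (P t)) (- (matrix_inv (P t) ** Q t))
              (- (transpose (Q t) ** matrix_inv (P t)))
              (transpose (Q t) ** matrix_inv (P t) ** Q t - R t - lam *\<^sub>R mat 1)"

end

theory Submission imports Defs begin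

definition fstv :: "real^('n::finite + 'n) \<Rightarrow> real^'n" where
  "fstv w = (\<chi> i. w $ Inl i)"
definition sndv :: "real^('n::finite + 'n) \<Rightarrow> real^'n" where
  "sndv w = (\<chi> i. w $ Inr i)"
definition joinv :: "real^'n \<Rightarrow> real^'n \<Rightarrow> real^('n::finite + 'n)" where
  "joinv a b = (\<chi> k. case k of Inl i \<Rightarrow> a $ i | Inr i \<Rightarrow> b $ i)"

lemma sum_Plus_UNIV: "(\<Sum>k\<in>(UNIV::('a::finite + 'b::finite) set). f k) = (\<Sum>i\<in>UNIV. f (Inl i)) + (\<Sum>j\<in>UNIV. f (Inr j))"
  by (simp add: UNIV_Plus_UNIV[symmetric] sum.Plus del: UNIV_Plus_UNIV)

lemma blockmat_mulv:
  "blockmat A B C D *v w = joinv (A *v fstv w + B *v sndv w) (C *v fstv w + D *v sndv w)"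
  by (auto simp: vec_eq_iff blockmat_def joinv_def fstv_def sndv_def matrix_vector_mult_def sum_Plus_UNIV split: sum.splits)

lemma fstv_joinv[simp]: "fstv (joinv a b) = a" and sndv_joinv[simp]: "sndv (joinv a b) = b"
  by (auto simp: vec_eq_iff fstv_def sndv_def joinv_def)

lemma joinv_eq: "w = joinv (fstv w) (sndv w)"
  by (auto simp: vec_eq_iff fstv_def sndv_def joinv_def split: sum.splits)

lemma neg_mulv: "(- A) *v x = - (A *v (x::real^'n))"
  by (simp add: vec_eq_iff matrix_vector_mult_def sum_negf)

lemma Jmat_mulv: "Jmat *v w = joinv (- sndv w) (fstv w)"
  unfolding Jmat_def blockmat_mulv by (simp add: neg_mulv)

lemma linear_fstv: "bounded_linear fstv"
  by (rule linear_conv_bounded_linear[THEN iffD1]) (auto intro!: linearI simp: fstv_def vec_eq_iff)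
lemma linear_sndv: "bounded_linear sndv"
  by (rule linear_conv_bounded_linear[THEN iffD1]) (auto intro!: linearI simp: sndv_def vec_eq_iff)

lemma fstv_zero[simp]: "fstv 0 = 0" and sndv_zero[simp]: "sndv 0 = 0"
  by (auto simp: vec_eq_iff fstv_def sndv_def)

lemma joinv_zero: "joinv 0 0 = 0"
  by (auto simp: vec_eq_iff joinv_def split: sum.splits)

lemma scaleR_mulv: "(c *\<^sub>R A) *v x = c *\<^sub>R (A *v (x::real^'n))"
  by (simp add: vec_eq_iff matrix_vector_mult_def sum_distrib_left algebra_simps)

lemma sol_deriv:
  fixes P Q R :: "real \<Rightarrow> real^'n::finite^'n"
  assumes inv: "P t ** matrix_inv (P t) = mat 1"
   and zd: "(z has_vector_derivative (Jmat *v (Bmat P Q R lam t *v z t))) (at t)"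
  defines "u \<equiv> matrix_inv (P t) *v (fstv (z t) - Q t *v sndv (z t))"
  shows "((\<lambda>s. sndv (z s)) has_vector_derivative u) (at t)"
    and "((\<lambda>s. fstv (z s)) has_vector_derivative (transpose (Q t) *v u + R t *v sndv (z t) + lam *\<^sub>R sndv (z t))) (at t)"
    and "fstv (z t) = P t *v u + Q t *v sndv (z t)"
proof -
  have e: "Jmat *v (Bmat P Q R lam t *v z t) = joinv (transpose (Q t) *v u + R t *v sndv (z t) + lam *\<^sub>R sndv (z t)) u"
    unfolding Jmat_mulv Bmat_def blockmat_mulv u_def
    by (simp add: neg_mulv scaleR_mulv matrix_vector_mult_diff_rdistrib matrix_vector_mult_diff_distrib
         matrix_vector_mul_assoc[symmetric] diff_diff_eq2 del: transpose_matrix_vector)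
    (simp add: algebra_simps del: transpose_matrix_vector)
  show "((\<lambda>s. sndv (z s)) has_vector_derivative u) (at t)"
    using bounded_linear.has_vector_derivative[OF linear_sndv zd] by (simp add: e)
  show "((\<lambda>s. fstv (z s)) has_vector_derivative (transpose (Q t) *v u + R t *v sndv (z t) + lam *\<^sub>R sndv (z t))) (at t)"
    using bounded_linear.has_vector_derivative[OF linear_fstv zd] by (simp add: e del: transpose_matrix_vector)
  show "fstv (z t) = P t *v u + Q t *v sndv (z t)"
    unfolding u_def by (simp add: matrix_vector_mul_assoc inv)
qed

lemma alg_ineq:
  fixes a b C1 C2 :: real
  assumes "C1 > 0"
  shows "C1 * a^2 - 2 * C2 * a * b + (2 * C2^2 / C1) * b^2 \<ge> C1 / 2 * a^2"
proof -
  have "0 \<le> (C1 * a - 2 * C2 * b)^2 / (2 * C1)" using assms by simp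
  also have "(C1 * a - 2 * C2 * b)^2 / (2 * C1) = C1 * a^2 - 2 * C2 * a * b + (2 * C2^2 / C1) * b^2 - C1 / 2 * a^2"
    using assms by (simp add: field_simps power2_eq_square)
  finally show ?thesis by simp
qed

lemma key_ineq:
  fixes P Q R :: "real^'n::finite^'n"
  assumes Pc: "(P *v u) \<bullet> u \<ge> C1 * (norm u)\<^sup>2"
    and Qb: "norm (Q *v y) \<le> C2 * norm y"
    and Rb: "norm (R *v y) \<le> C3 * norm y"
    and C1: "C1 > 0" and lam: "lam \<ge> 2 * C2\<^sup>2 / C1 + C3"
  shows "(transpose Q *v u + R *v y + lam *\<^sub>R y) \<bullet> y + (P *v u + Q *v y) \<bullet> u \<ge> C1 / 2 * (norm u)\<^sup>2"
proof -
  have e: "(transpose Q *v u + R *v y + lam *\<^sub>R y) \<bullet> y + (P *v u + Q *v y) \<bullet> u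
      = 2 * ((Q *v y) \<bullet> u) + (R *v y) \<bullet> y + lam * (norm y)^2 + (P *v u) \<bullet> u"
    using dot_lmul_matrix[of u Q y] inner_commute[of "Q *v y" u]
    by (simp add: inner_add_left inner_add_right power2_norm_eq_inner)
  have q: "(Q *v y) \<bullet> u \<ge> - (C2 * norm y * norm u)"
  proof -
    have "\<bar>(Q *v y) \<bullet> u\<bar> \<le> norm (Q *v y) * norm u" by (rule Cauchy_Schwarz_ineq2)
    also have "\<dots> \<le> C2 * norm y * norm u" using Qb by (simp add: mult_right_mono)
    finally show ?thesis by linarith
  qed
  have r: "(R *v y) \<bullet> y \<ge> - (C3 * (norm y)^2)"
  proof -
    have "\<bar>(R *v y) \<bullet> y\<bar> \<le> norm (R *v y) * norm y" by (rule Cauchy_Schwarz_ineq2)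
    also have "\<dots> \<le> C3 * norm y * norm y" using Rb by (simp add: mult_right_mono)
    finally show ?thesis by (simp add: power2_eq_square)
  qed
  have l: "lam * (norm y)^2 \<ge> (2 * C2\<^sup>2 / C1 + C3) * (norm y)^2"
    using lam by (simp add: mult_right_mono)
  have "C1 * (norm u)^2 - 2 * C2 * (norm u) * (norm y) + (2 * C2^2 / C1) * (norm y)^2 \<ge> C1 / 2 * (norm u)^2"
    by (rule alg_ineq[OF C1])
  then show ?thesis unfolding e using q r l Pc by (simp add: algebra_simps)
qed

lemma sol_lemma:
  fixes P Q R :: "real \<Rightarrow> real^'n::finite^'n"
  assumes inv: "\<And>t. P t ** matrix_inv (P t) = mat 1"
    and Pc: "\<And>t v. (P t *v v) \<bullet> v \<ge> C1 * (norm v)\<^sup>2"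
    and Qb: "\<And>t v. norm (Q t *v v) \<le> C2 * norm v"
    and Rb: "\<And>t v. norm (R t *v v) \<le> C3 * norm v"
    and C1: "C1 > 0" and lam: "lam \<ge> 2 * C2\<^sup>2 / C1 + C3"
    and zd: "\<And>t. (z has_vector_derivative (Jmat *v (Bmat P Q R lam t *v z t))) (at t)"
  shows "\<exists>u D. ((\<lambda>s. sndv (z s)) has_vector_derivative u) (at t)
     \<and> fstv (z t) = P t *v u + Q t *v sndv (z t)
     \<and> ((\<lambda>s. fstv (z s) \<bullet> sndv (z s)) has_real_derivative D) (at t)
     \<and> D \<ge> C1 / 2 * (norm u)\<^sup>2"
proof -
  define u where "u = matrix_inv (P t) *v (fstv (z t) - Q t *v sndv (z t))"
  note d = sol_deriv[where t=t, OF inv zd, folded u_def]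
  have fd: "((\<lambda>s. fstv (z s) \<bullet> sndv (z s)) has_real_derivative
     (fstv (z t) \<bullet> u + (transpose (Q t) *v u + R t *v sndv (z t) + lam *\<^sub>R sndv (z t)) \<bullet> sndv (z t))) (at t)"
    unfolding has_real_derivative_iff_has_vector_derivative
    using bounded_bilinear.has_vector_derivative[OF bounded_bilinear_inner d(2) d(1)]
    by (simp del: transpose_matrix_vector)
  have "(transpose (Q t) *v u + R t *v sndv (z t) + lam *\<^sub>R sndv (z t)) \<bullet> sndv (z t) + (P t *v u + Q t *v sndv (z t)) \<bullet> u \<ge> C1 / 2 * (norm u)\<^sup>2"
    by (rule key_ineq[OF Pc Qb Rb C1 lam])
  then have "fstv (z t) \<bullet> u + (transpose (Q t) *v u + R t *v sndv (z t) + lam *\<^sub>R sndv (z t)) \<bullet> sndv (z t) \<ge> C1 / 2 * (norm u)\<^sup>2"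
    using d(3) by (simp add: inner_commute[of "fstv (z t)"] del: transpose_matrix_vector)
  then show ?thesis using d(1) d(3) fd by blast
qed

lemma mono_f:
  fixes P Q :: "real \<Rightarrow> real^'n::finite^'n" and z :: "real \<Rightarrow> real^('n + 'n)"
  assumes H: "\<And>t. \<exists>u D. ((\<lambda>s. sndv (z s)) has_vector_derivative u) (at t)
     \<and> fstv (z t) = P t *v u + Q t *v sndv (z t)
     \<and> ((\<lambda>s. fstv (z s) \<bullet> sndv (z s)) has_real_derivative D) (at t)
     \<and> D \<ge> C1 / 2 * (norm u)\<^sup>2"
    and C1: "C1 > 0" and ab: "a \<le> b"
  shows "fstv (z a) \<bullet> sndv (z a) \<le> fstv (z b) \<bullet> sndv (z b)"
proof -
  have "\<exists>y. ((\<lambda>s. fstv (z s) \<bullet> sndv (z s)) has_real_derivative y) (at x) \<and> y \<ge> 0" for x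
  proof -
    obtain u :: "real^'n" and D where "((\<lambda>s. fstv (z s) \<bullet> sndv (z s)) has_real_derivative D) (at x)" "D \<ge> C1 / 2 * (norm u)\<^sup>2"
      using H[of x] by blast
    moreover have "C1 / 2 * (norm u)\<^sup>2 \<ge> 0" using C1 by simp
    ultimately show ?thesis by (intro exI[of _ D]) auto
  qed
  then show ?thesis
    using DERIV_nonneg_imp_nondecreasing[OF ab, of "\<lambda>s. fstv (z s) \<bullet> sndv (z s)"] by blast
qed

lemma f_tendsto:
  fixes P Q :: "real \<Rightarrow> real^'n::finite^'n" and z :: "real \<Rightarrow> real^('n + 'n)"
  assumes "((\<lambda>t. z t) \<longlongrightarrow> 0) F"
  shows "((\<lambda>s. fstv (z s) \<bullet> sndv (z s)) \<longlongrightarrow> 0) F"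
proof -
  have "((\<lambda>s. fstv (z s)) \<longlongrightarrow> fstv 0) F" by (rule bounded_linear.tendsto[OF linear_fstv assms])
  moreover have "((\<lambda>s. sndv (z s)) \<longlongrightarrow> sndv 0) F" by (rule bounded_linear.tendsto[OF linear_sndv assms])
  ultimately show ?thesis using tendsto_inner by fastforce
qed

lemma L2:
  fixes P Q :: "real \<Rightarrow> real^'n::finite^'n" and z :: "real \<Rightarrow> real^('n + 'n)"
  assumes H: "\<And>t. \<exists>u D. ((\<lambda>s. sndv (z s)) has_vector_derivative u) (at t)
     \<and> fstv (z t) = P t *v u + Q t *v sndv (z t)
     \<and> ((\<lambda>s. fstv (z s) \<bullet> sndv (z s)) has_real_derivative D) (at t)
     \<and> D \<ge> C1 / 2 * (norm u)\<^sup>2"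
    and C1: "C1 > 0" and lim: "((\<lambda>t. z t) \<longlongrightarrow> 0) at_top"
  shows "fstv (z t0) \<bullet> sndv (z t0) \<le> 0"
proof (rule tendsto_le[OF _ f_tendsto[OF lim] tendsto_const])
  show "at_top \<noteq> (bot :: real filter)" by simp
  show "\<forall>\<^sub>F x in at_top. fstv (z t0) \<bullet> sndv (z t0) \<le> fstv (z x) \<bullet> sndv (z x)"
    using eventually_ge_at_top[of t0] by eventually_elim (rule mono_f[OF H C1])
qed

lemma L1:
  fixes P Q :: "real \<Rightarrow> real^'n::finite^'n" and z :: "real \<Rightarrow> real^('n + 'n)"
  assumes H: "\<And>t. \<exists>u D. ((\<lambda>s. sndv (z s)) has_vector_derivative u) (at t)
     \<and> fstv (z t) = P t *v u + Q t *v sndv (z t)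
     \<and> ((\<lambda>s. fstv (z s) \<bullet> sndv (z s)) has_real_derivative D) (at t)
     \<and> D \<ge> C1 / 2 * (norm u)\<^sup>2"
    and C1: "C1 > 0" and lim: "((\<lambda>t. z t) \<longlongrightarrow> 0) at_bot"
    and le: "fstv (z t0) \<bullet> sndv (z t0) \<le> 0"
  shows "z t0 = 0"
proof -
  let ?f = "\<lambda>s. fstv (z s) \<bullet> sndv (z s)"
  have nn: "?f s \<ge> 0" for s
  proof (rule tendsto_le[OF _ tendsto_const f_tendsto[OF lim]])
    show "at_bot \<noteq> (bot :: real filter)" by simp
    show "\<forall>\<^sub>F x in at_bot. ?f x \<le> ?f s"
      using eventually_le_at_bot[of s] by eventually_elim (rule mono_f[OF H C1])
  qed
  have u0: "((\<lambda>s. sndv (z s)) has_vector_derivative 0) (at s) \<and> fstv (z s) = Q s *v sndv (z s)"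
    if "s \<le> t0" for s
  proof -
    obtain u :: "real^'n" and D where u: "((\<lambda>s. sndv (z s)) has_vector_derivative u) (at s)"
      "fstv (z s) = P s *v u + Q s *v sndv (z s)"
      "(?f has_real_derivative D) (at s)" "D \<ge> C1 / 2 * (norm u)\<^sup>2"
      using H[of s] by blast
    have "?f s \<le> ?f t0" by (rule mono_f[OF H C1 that])
    then have fs: "?f s = 0" using nn[of s] le by linarith
    have "D = 0"
      by (rule DERIV_local_min[OF u(3), of 1]) (use fs nn in auto)
    then have "C1 / 2 * (norm u)\<^sup>2 \<le> 0" using u(4) by simp
    then have "u = 0" using C1
      by (metis divide_pos_pos mult_le_0_iff norm_eq_zero not_le power2_less_eq_zero_iff zero_less_numeral)
    then show ?thesis using u by simp
  qed
  have "\<exists>c. \<forall>x\<in>{..t0}. sndv (z x) = c"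
  proof (rule has_derivative_zero_constant)
    show "convex {..t0}" by simp
    fix x assume "x \<in> {..t0}"
    then have "((\<lambda>s. sndv (z s)) has_vector_derivative 0) (at x within {..t0})"
      using u0 has_vector_derivative_at_within by fastforce
    then show "((\<lambda>s. sndv (z s)) has_derivative (\<lambda>h. 0)) (at x within {..t0})"
      by (simp add: has_vector_derivative_def)
  qed
  then obtain c where c: "\<And>x. x \<le> t0 \<Longrightarrow> sndv (z x) = c" by auto
  have "((\<lambda>s. sndv (z s)) \<longlongrightarrow> sndv 0) at_bot"
    by (rule bounded_linear.tendsto[OF linear_sndv lim])
  then have "((\<lambda>s. sndv (z s)) \<longlongrightarrow> 0) at_bot"
    by (simp add: )
  moreover have "\<forall>\<^sub>F s in at_bot. sndv (z s) = c"
  proof -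
    have "eventually (\<lambda>s. s \<le> t0) (at_bot :: real filter)" by simp
    then show ?thesis by (rule eventually_mono) (use c in auto)
  qed
  ultimately have "((\<lambda>s::real. c) \<longlongrightarrow> 0) at_bot"
    by (rule Lim_transform_eventually)
  then have "c = 0" by (simp add: tendsto_const_iff)
  then have y0: "sndv (z t0) = 0" using c by simp
  then have "fstv (z t0) = 0" using u0[of t0] by simp
  then show ?thesis using y0 joinv_eq[of "z t0"] joinv_zero by simp
qed

lemma inv_from_below:
  fixes A :: "real^'n::finite^'n"
  assumes C1: "C1 > 0" and b: "\<And>v. norm (A *v v) \<ge> C1 * norm v"
  shows "A ** matrix_inv A = mat 1"
proof -
  have "inj ((*v) A)"
  proof (rule injI)
    fix x y assume "A *v x = A *v y"
    then have "A *v (x - y) = 0" by (simp add: matrix_vector_mult_diff_distrib)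
    then have "C1 * norm (x - y) \<le> 0" using b[of "x - y"] by simp
    then have "norm (x - y) \<le> 0" using C1 by (simp add: mult_le_0_iff)
    then show "x = y" by simp
  qed
  then have "invertible A" using matrix_left_invertible_injective invertible_left_inverse by blast
  then have "\<exists>A'. A ** A' = mat 1 \<and> A' ** A = mat 1" by (simp add: invertible_def)
  then have "A ** matrix_inv A = mat 1 \<and> matrix_inv A ** A = mat 1"
    unfolding matrix_inv_def by (rule someI_ex)
  then show ?thesis by simp
qed

lemma bl_mulv: "bounded_linear (\<lambda>M::real^'m::finite^'k::finite. M *v v)"
  by (rule linear_conv_bounded_linear[THEN iffD1])
     (auto intro!: linearI simp: matrix_vector_mult_add_rdistrib scaleR_mulv)

theorem lemma3p8:
  fixes P Q R :: "real \<Rightarrow> real^'n::finite^'n"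
    and C1 C2 C3 :: real
    and gamma :: "real \<Rightarrow> real \<Rightarrow> real \<Rightarrow> real^('n + 'n)^('n + 'n)"
  assumes P_C1: "P C1_differentiable_on UNIV"
    and Q_C1: "Q C1_differentiable_on UNIV"
    and R_C1: "R C1_differentiable_on UNIV"
    and P_sym: "\<And>t. transpose (P t) = P t"
    and R_sym: "\<And>t. transpose (R t) = R t"
    and P_lim: "(\<exists>L. (P \<longlongrightarrow> L) at_top) \<and> (\<exists>L. (P \<longlongrightarrow> L) at_bot)"
    and Q_lim: "(\<exists>L. (Q \<longlongrightarrow> L) at_top) \<and> (\<exists>L. (Q \<longlongrightarrow> L) at_bot)"
    and R_lim: "(\<exists>L. (R \<longlongrightarrow> L) at_top) \<and> (\<exists>L. (R \<longlongrightarrow> L) at_bot)"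
    and C1_pos: "C1 > 0"
    and P_coercive: "\<And>t v. (P t *v v) \<bullet> v \<ge> C1 * (norm v)\<^sup>2"
    and P_below: "\<And>t v. norm (P t *v v) \<ge> C1 * norm v"
    and Q_bound: "\<And>t v. norm (Q t *v v) \<le> C2 * norm v"
    and R_bound: "\<And>t v. norm (R t *v v) \<le> C3 * norm v"
    and gamma_ode: "\<And>tau lam t. (gamma tau lam has_vector_derivative
                        (Jmat ** Bmat P Q R lam t ** gamma tau lam t)) (at t)"
    and gamma_init: "\<And>tau lam. gamma tau lam tau = mat 1"
  shows "\<forall>tau \<ge> 0. \<forall>lam \<ge> 2 * C2\<^sup>2 / C1 + C3.
           {v. ((\<lambda>t. gamma (- tau) lam t *v v) \<longlongrightarrow> 0) at_bot}
           \<inter> {v. ((\<lambda>t. gamma tau lam t *v v) \<longlongrightarrow> 0) at_top} = {0}"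
proof (intro allI impI)
  fix tau lam :: real
  assume lam: "lam \<ge> 2 * C2\<^sup>2 / C1 + C3"
  have inv: "\<And>t. P t ** matrix_inv (P t) = mat 1"
    by (rule inv_from_below[OF C1_pos P_below])
  have H: "\<exists>u D. ((\<lambda>s. sndv (gamma a lam s *v v)) has_vector_derivative u) (at t)
     \<and> fstv (gamma a lam t *v v) = P t *v u + Q t *v sndv (gamma a lam t *v v)
     \<and> ((\<lambda>s. fstv (gamma a lam s *v v) \<bullet> sndv (gamma a lam s *v v)) has_real_derivative D) (at t)
     \<and> D \<ge> C1 / 2 * (norm u)\<^sup>2" for a v t
  proof (rule sol_lemma[OF inv P_coercive Q_bound R_bound C1_pos lam])
    fix t
    show "((\<lambda>s. gamma a lam s *v v) has_vector_derivative Jmat *v (Bmat P Q R lam t *v (gamma a lam t *v v))) (at t)"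
      using bounded_linear.has_vector_derivative[OF bl_mulv gamma_ode[of a lam t], of v]
      by (simp add: matrix_vector_mul_assoc matrix_mul_assoc)
  qed
  show "{v. ((\<lambda>t. gamma (- tau) lam t *v v) \<longlongrightarrow> 0) at_bot}
           \<inter> {v. ((\<lambda>t. gamma tau lam t *v v) \<longlongrightarrow> 0) at_top} = {0}"
  proof (intro equalityI subsetI)
    fix v assume "v \<in> {v. ((\<lambda>t. gamma (- tau) lam t *v v) \<longlongrightarrow> 0) at_bot}
           \<inter> {v. ((\<lambda>t. gamma tau lam t *v v) \<longlongrightarrow> 0) at_top}"
    then have l1: "((\<lambda>t. gamma (- tau) lam t *v v) \<longlongrightarrow> 0) at_bot"
      and l2: "((\<lambda>t. gamma tau lam t *v v) \<longlongrightarrow> 0) at_top" by auto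
    have "fstv (gamma tau lam tau *v v) \<bullet> sndv (gamma tau lam tau *v v) \<le> 0"
      by (rule L2[OF H C1_pos l2])
    then have "fstv (gamma (- tau) lam (- tau) *v v) \<bullet> sndv (gamma (- tau) lam (- tau) *v v) \<le> 0"
      by (simp add: gamma_init)
    then have "gamma (- tau) lam (- tau) *v v = 0"
      by (rule L1[OF H C1_pos l1])
    then show "v \<in> {0}" by (simp add: gamma_init)
  qed auto
qed

end
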